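(* Let $X,Y$ be Banach spaces and let $T:X\to Y$ be a hereditary-SCD-operator. Then for every $x^*\in X^*$ the operator $T\tilde{+}\mathrm{Re}\,x^*:X\to Y\oplus_1\mathbb{R}$, $x\mapsto(Tx,\mathrm{Re}\,x^*(x))$, is an SCD-operator, i.e. $[T\tilde{+}\mathrm{Re}\,x^*](B_X)$ is an SCD set.
   Context: $B_X$ is the closed unit ball of $X$. $Y\oplus_1\mathbb{R}$ is the direct sum (viewed as a real Banach space) with norm $\|(y,t)\|=\|y\|+|t|$. A slice of a convex bounded set $A$ is $S(A,z^*,\varepsilon)=\{a\in A:\ \mathrm{Re}\,z^*(a)>\sup\mathrm{Re}\,z^*(A)-\varepsilon\}$; $A$ is an SCD set if there is a sequence $(S_n)$ of slices of $A$ such that $A\subseteq\overline{\mathrm{conv}}(B)$ for every $B\subseteq A$ intersecting all the $S_n$. An operator $S:X\to Z$ is an SCD-operator if $S(B_X)$ is an SCD set; $T:X\to Y$ is a hereditary-SCD-operator if every convex subset of $T(B_X)$ is an SCD set. *)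

theory Defs
  imports "HOL-Analysis.Analysis"
begin

definition slice :: "'a::real_normed_vector set \<Rightarrow> ('a \<Rightarrow> real) \<Rightarrow> real \<Rightarrow> 'a set" where
  "slice A f eps = {a \<in> A. f a > Sup (f ` A) - eps}"

definition is_slice :: "'a::real_normed_vector set \<Rightarrow> 'a set \<Rightarrow> bool" where
  "is_slice A S \<longleftrightarrow> (\<exists>f eps. bounded_linear f \<and> eps > 0 \<and> S = slice A f eps)"

definition SCD_set :: "'a::real_normed_vector set \<Rightarrow> bool" where
  "SCD_set A \<longleftrightarrow> convex A \<and> bounded A \<and>
     (\<exists>S :: nat \<Rightarrow> 'a set. (\<forall>n. is_slice A (S n)) \<and>
        (\<forall>B. B \<subseteq> A \<longrightarrow> (\<forall>n. B \<inter> S n \<noteq> {}) \<longrightarrow> A \<subseteq> closure (convex hull B)))"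

definition SCD_operator :: "('a::real_normed_vector \<Rightarrow> 'b::real_normed_vector) \<Rightarrow> bool" where
  "SCD_operator S \<longleftrightarrow> bounded_linear S \<and> SCD_set (S ` cball 0 1)"

definition hereditary_SCD_operator :: "('a::real_normed_vector \<Rightarrow> 'b::real_normed_vector) \<Rightarrow> bool" where
  "hereditary_SCD_operator T \<longleftrightarrow> bounded_linear T \<and>
     (\<forall>C. C \<subseteq> T ` cball 0 1 \<longrightarrow> convex C \<longrightarrow> SCD_set C)"

end

theory Submission
  imports Defs
begin

lemma sep2d:
  fixes P Q :: "(real \<times> real) set"
  assumes bP: "bounded P" and cQ: "convex Q" and QP: "Q \<subseteq> P" and Qne: "Q \<noteq> {}"
    and H: "\<And>a b. a \<in> \<rat> \<Longrightarrow> b \<in> \<rat> \<Longrightarrow>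
       Sup ((\<lambda>x. a * fst x + b * snd x) ` P) \<le> Sup ((\<lambda>x. a * fst x + b * snd x) ` Q)"
  shows "P \<subseteq> closure Q"
proof
  fix p assume pP: "p \<in> P"
  show "p \<in> closure Q"
  proof (rule ccontr)
    assume "p \<notin> closure Q"
    then obtain w c where w1: "inner w p < c" and w2: "\<forall>x\<in>closure Q. c < inner w x"
      using separating_hyperplane_closed_point[of "closure Q" p] cQ
      by (auto simp: convex_closure)
    obtain R where R: "R > 0" "\<forall>x\<in>P. norm x \<le> R" using bP bounded_pos by blast
    define g where "g = c - inner w p"
    have g0: "g > 0" using w1 g_def by simp
    define \<eta> where "\<eta> = g / (6 * R)"
    have eta0: "\<eta> > 0" using g0 R by (simp add: \<eta>_def)
    obtain a' where a': "a' \<in> \<rat>" "- fst w - \<eta> < a'" "a' < - fst w + \<eta>"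
      using Rats_dense_in_real[of "- fst w - \<eta>" "- fst w + \<eta>"] eta0 by auto
    obtain b' where b': "b' \<in> \<rat>" "- snd w - \<eta> < b'" "b' < - snd w + \<eta>"
      using Rats_dense_in_real[of "- snd w - \<eta>" "- snd w + \<eta>"] eta0 by auto
    define h where "h = (\<lambda>x::real\<times>real. a' * fst x + b' * snd x)"
    have approx: "\<bar>h x + inner w x\<bar> \<le> g / 3" if "x \<in> P" for x
    proof -
      have n: "\<bar>fst x\<bar> \<le> R" "\<bar>snd x\<bar> \<le> R"
      proof -
        have "norm (fst x) \<le> norm x" by (metis norm_fst_le prod.collapse)
        moreover have "norm (snd x) \<le> norm x" by (metis norm_snd_le prod.collapse)
        ultimately show "\<bar>fst x\<bar> \<le> R" "\<bar>snd x\<bar> \<le> R" using R(2) that by auto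
      qed
      have "h x + inner w x = (a' + fst w) * fst x + (b' + snd w) * snd x"
        by (simp add: h_def inner_prod_def algebra_simps)
      hence "\<bar>h x + inner w x\<bar> \<le> \<bar>a' + fst w\<bar> * \<bar>fst x\<bar> + \<bar>b' + snd w\<bar> * \<bar>snd x\<bar>"
        by (simp add: abs_mult[symmetric]) 
      also have "\<dots> \<le> \<eta> * R + \<eta> * R"
        using a' b' n eta0 by (intro add_mono mult_mono) auto
      also have "\<dots> = g / 3" using R by (simp add: \<eta>_def)
      finally show ?thesis .
    qed
    have bddP: "bdd_above (h ` P)"
    proof -
      have "y \<le> g/3 + norm w * R" if "y \<in> h ` P" for y
      proof -
        obtain x where x: "x \<in> P" "y = h x" using \<open>y \<in> h ` P\<close> by auto
        have "\<bar>inner w x\<bar> \<le> norm w * norm x" by (rule Cauchy_Schwarz_ineq2)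
        also have "\<dots> \<le> norm w * R" using R(2) x(1) by (simp add: mult_left_mono)
        finally have "\<bar>inner w x\<bar> \<le> norm w * R" .
        moreover have "\<bar>h x + inner w x\<bar> \<le> g / 3" using approx[OF x(1)] .
        ultimately show ?thesis unfolding abs_le_iff using x(2) by linarith
      qed
      then show ?thesis unfolding bdd_above_def by blast
    qed
    have "h p \<le> Sup (h ` P)" by (rule cSup_upper[OF imageI[OF pP] bddP])
    also have "\<dots> \<le> Sup (h ` Q)" using H[OF a'(1) b'(1)] by (simp add: h_def)
    also have "\<dots> \<le> - c + g / 3"
    proof (rule cSup_least)
      show "h ` Q \<noteq> {}" using Qne by simp
      fix y assume "y \<in> h ` Q"
      then obtain x where x: "x \<in> Q" "y = h x" by auto
      have "c < inner w x" using w2 x closure_subset by blast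
      moreover have "\<bar>h x + inner w x\<bar> \<le> g / 3" using approx[of x] x QP by auto
      ultimately show "y \<le> - c + g / 3" unfolding abs_le_iff using x(2) by linarith
    qed
    finally have "h p \<le> - c + g/3" .
    moreover have "h p \<ge> - inner w p - g/3" using approx[OF pP] unfolding abs_le_iff by linarith
    ultimately show False using g0 g_def by linarith
  qed
qed


lemma bl_comb:
  assumes "bounded_linear z"
  shows "bounded_linear (\<lambda>p::'b::real_normed_vector \<times> real. a * z (fst p) + b * snd p)"
proof -
  have "bounded_linear (\<lambda>p::'b \<times> real. z (fst p))"
    using bounded_linear_compose[OF assms bounded_linear_fst] .
  then show ?thesis
    by (intro bounded_linear_add bounded_linear_const_mult bounded_linear_snd)
qed

lemma dist_pair_le:
  fixes p :: "'b::real_normed_vector \<times> real"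
  shows "dist p (y, t) \<le> dist (fst p) y + dist (snd p) t"
proof -
  have "dist p (y, t) = sqrt ((dist (fst p) y)\<^sup>2 + (dist (snd p) t)\<^sup>2)"
    by (metis dist_Pair_Pair prod.collapse)
  also have "\<dots> \<le> dist (fst p) y + dist (snd p) t"
    by (rule sqrt_sum_squares_le_sum) auto
  finally show ?thesis .
qed

theorem lemma5p12:
  fixes T :: "'a::banach \<Rightarrow> 'b::banach" and xs :: "'a \<Rightarrow> real"
  assumes "hereditary_SCD_operator T"
    and "bounded_linear xs"
  shows "SCD_operator (\<lambda>x. (T x, xs x))"
proof -
  have blT: "bounded_linear T" using assms(1) hereditary_SCD_operator_def by blast
  have hT: "\<And>C. C \<subseteq> T ` cball 0 1 \<Longrightarrow> convex C \<Longrightarrow> SCD_set C"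
    using assms(1) hereditary_SCD_operator_def by blast
  have blF: "bounded_linear (\<lambda>x. (T x, xs x))" by (rule bounded_linear_Pair[OF blT assms(2)])
  define A where "A = (\<lambda>x. (T x, xs x)) ` cball (0::'a) 1"
  have cA: "convex A" unfolding A_def
    by (rule convex_linear_image[OF bounded_linear.linear[OF blF] convex_cball])
  have bA: "bounded A" unfolding A_def by (rule bounded_linear_image[OF bounded_cball blF])
  define K where "K = (\<lambda>(c::real) r. T ` {x \<in> cball (0::'a) 1. r < c * xs x})"
  have cK: "convex (K c r)" for c r
  proof -
    have "convex ((\<lambda>x. c * xs x) -` {r<..})"
      by (rule convex_linear_vimage) (auto intro: bounded_linear.linear bounded_linear_const_mult assms(2))
    hence "convex (cball 0 1 \<inter> (\<lambda>x. c * xs x) -` {r<..})" by (rule convex_Int[OF convex_cball])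
    moreover have "{x \<in> cball (0::'a) 1. r < c * xs x} = cball 0 1 \<inter> (\<lambda>x. c * xs x) -` {r<..}" by auto
    ultimately show ?thesis unfolding K_def using convex_linear_image bounded_linear.linear[OF blT] by auto
  qed
  have KT: "K c r \<subseteq> T ` cball 0 1" for c r unfolding K_def by auto
  have sK: "SCD_set (K c r)" for c r using hT[OF KT cK] .
  have bK: "bounded (K c r)" for c r
    using bounded_subset[OF bounded_linear_image[OF bounded_cball blT] KT] .
  have exS: "\<exists>S::nat \<Rightarrow> 'b set. (\<forall>n. is_slice (K c r) (S n)) \<and>
      (\<forall>B. B \<subseteq> K c r \<longrightarrow> (\<forall>n. B \<inter> S n \<noteq> {}) \<longrightarrow> K c r \<subseteq> closure (convex hull B))" for c r
    using sK[of c r] unfolding SCD_set_def by (elim conjE) assumption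
  define Sf where "Sf = (\<lambda>c r. SOME S::nat \<Rightarrow> 'b set. (\<forall>n. is_slice (K c r) (S n)) \<and>
      (\<forall>B. B \<subseteq> K c r \<longrightarrow> (\<forall>n. B \<inter> S n \<noteq> {}) \<longrightarrow> K c r \<subseteq> closure (convex hull B)))"
  have SfP: "(\<forall>n. is_slice (K c r) (Sf c r n)) \<and>
      (\<forall>B. B \<subseteq> K c r \<longrightarrow> (\<forall>n. B \<inter> Sf c r n \<noteq> {}) \<longrightarrow> K c r \<subseteq> closure (convex hull B))" for c r
    unfolding Sf_def by (rule someI_ex[OF exS])
  have Sf1: "\<And>c r n. is_slice (K c r) (Sf c r n)" using SfP by blast
  have Sf2: "\<And>c r B. B \<subseteq> K c r \<Longrightarrow> (\<forall>n. B \<inter> Sf c r n \<noteq> {}) \<Longrightarrow> K c r \<subseteq> closure (convex hull B)"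
    using SfP by blast
  have ex: "\<exists>ze. bounded_linear (fst ze) \<and> snd ze > 0 \<and> Sf c r n = slice (K c r) (fst ze) (snd ze)" for c r n
    using Sf1[of c r n] unfolding is_slice_def by auto
  define ZE where "ZE = (\<lambda>c r n. SOME ze. bounded_linear (fst ze) \<and> snd ze > 0 \<and> Sf c r n = slice (K c r) (fst ze) (snd ze))"
  have ZE: "bounded_linear (fst (ZE c r n)) \<and> snd (ZE c r n) > 0 \<and> Sf c r n = slice (K c r) (fst (ZE c r n)) (snd (ZE c r n))" for c r n
    unfolding ZE_def by (rule someI_ex[OF ex])
  define zf where "zf = (\<lambda>c r n. fst (ZE c r n))"
  define ef where "ef = (\<lambda>c r n. snd (ZE c r n))"
  have zf1: "\<And>c r n. bounded_linear (zf c r n)" and ef: "\<And>c r n. ef c r n > 0"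
    and zf3: "\<And>c r n. Sf c r n = slice (K c r) (zf c r n) (ef c r n)"
    using ZE unfolding zf_def ef_def by auto
  define G where "G = (\<lambda>z (a::real) (b::real) (p::'b\<times>real). a * z (fst p) + b * snd p)"
  define sl where "sl = (\<lambda>(q::rat, bb::bool, k::nat, a::rat, b::rat, m::nat).
     slice A (G (zf (if bb then 1 else -1) (of_rat q) k) (of_rat a) (of_rat b)) (1 / (real m + 1)))"
  define S where "S = (\<lambda>n. sl (from_nat n))"
  have slS: "is_slice A (S n)" for n
  proof -
    obtain q bb k a b m where e: "(from_nat n :: rat \<times> bool \<times> nat \<times> rat \<times> rat \<times> nat) = (q,bb,k,a,b,m)" using prod_cases6 by blast
    have h1: "bounded_linear (G (zf (if bb then 1 else -1) (of_rat q) k) (of_rat a) (of_rat b))"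
      unfolding G_def by (rule bl_comb[OF zf1])
    have h2: "(1 / (real m + 1)) > 0" by simp
    have isl: "is_slice A (slice A g ee)" if "bounded_linear g" "ee > 0" for g ee
      unfolding is_slice_def using that by blast
    have "S n = slice A (G (zf (if bb then 1 else -1) (of_rat q) k) (of_rat a) (of_rat b)) (1 / (real m + 1))"
      unfolding S_def sl_def e by simp
    then show ?thesis using isl[OF h1 h2] by simp
  qed
  have key: "A \<subseteq> closure (convex hull B)" if BA: "B \<subseteq> A" and BS: "\<forall>n. B \<inter> S n \<noteq> {}" for B
  proof -
    define D where "D = convex hull B"
    have DA: "D \<subseteq> A" using hull_minimal[OF BA, of convex] cA D_def by blast
    have cD: "convex D" by (simp add: D_def)
    have BD: "B \<subseteq> D" by (simp add: D_def hull_subset)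
    have Bne: "B \<noteq> {}" using BS by blast
    have meet: "\<exists>p\<in>B. p \<in> sl (q,bb,k,a,b,m)" for q bb k a b m
      using BS[rule_format, of "to_nat (q,bb,k,a,b,m)"] unfolding S_def by auto
    have supG: "Sup (G (zf c (of_rat q) k) a b ` A) \<le> Sup (G (zf c (of_rat q) k) a b ` D)"
      if c: "c = 1 \<or> c = -1" and ab: "a \<in> \<rat>" "b \<in> \<rat>" for c q k a b
    proof -
      obtain a0 where a0: "a = of_rat a0" using ab(1) Rats_cases by blast
      obtain b0 where b0: "b = of_rat b0" using ab(2) Rats_cases by blast
      obtain bb where bb: "c = (if bb then 1 else -1)" using c by (metis)
      define g where "g = G (zf c (of_rat q) k) a b"
      have blg: "bounded_linear g" unfolding g_def G_def by (rule bl_comb[OF zf1])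
      have bdA: "bdd_above (g ` A)" by (rule bounded_imp_bdd_above[OF bounded_linear_image[OF bA blg]])
      have bdD: "bdd_above (g ` D)" by (rule bdd_above_mono[OF bdA image_mono[OF DA]])
      show ?thesis unfolding g_def[symmetric]
      proof (rule ccontr)
        assume "\<not> Sup (g ` A) \<le> Sup (g ` D)"
        then obtain m where m: "inverse (real (Suc m)) < Sup (g ` A) - Sup (g ` D)"
          using reals_Archimedean[of "Sup (g ` A) - Sup (g ` D)"] by auto
        obtain p where p: "p \<in> B" "p \<in> sl (q,bb,k,a0,b0,m)" using meet by blast
        have "p \<in> slice A g (1 / (real m + 1))" using p(2) unfolding sl_def g_def
          by (simp add: a0 b0 bb)
        hence "g p > Sup (g ` A) - 1 / (real m + 1)" unfolding slice_def by auto
        moreover have "g p \<le> Sup (g ` D)"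
        proof -
          have pD: "p \<in> D" using BD p(1) by blast
          show ?thesis by (rule cSup_upper[OF imageI[OF pD] bdD])
        qed
        ultimately show False using m by (simp add: inverse_eq_divide add.commute)
      qed
    qed
    have region: "\<exists>p\<in>D. r < c * snd p \<and> fst p \<in> Sf c r k"
      if c: "c = 1 \<or> c = -1" and r: "r = of_rat q" and Kne: "K c r \<noteq> {}" for c r q k
    proof -
      define z where "z = zf c r k"
      define e where "e = ef c r k"
      define \<Phi> where "\<Phi> = (\<lambda>p::'b\<times>real. (z (fst p), c * snd p))"
      have blz: "bounded_linear z" unfolding z_def by (rule zf1)
      have blPhi: "bounded_linear \<Phi>" unfolding \<Phi>_def
        by (intro bounded_linear_Pair bounded_linear_compose[OF blz bounded_linear_fst]
            bounded_linear_const_mult bounded_linear_snd)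
      define P where "P = \<Phi> ` A"
      define Q where "Q = \<Phi> ` D"
      have PQ: "P \<subseteq> closure Q"
      proof (rule sep2d)
        show "bounded P" unfolding P_def by (rule bounded_linear_image[OF bA blPhi])
        show "convex Q" unfolding Q_def by (rule convex_linear_image[OF bounded_linear.linear[OF blPhi] cD])
        show "Q \<subseteq> P" unfolding P_def Q_def using DA by auto
        show "Q \<noteq> {}" unfolding Q_def using Bne BD by auto
        fix a b :: real assume ab: "a \<in> \<rat>" "b \<in> \<rat>"
        have e1: "(\<lambda>x. a * fst x + b * snd x) ` P = G z a (b*c) ` A"
          unfolding P_def \<Phi>_def G_def by (simp add: image_image mult.assoc)
        have e2: "(\<lambda>x. a * fst x + b * snd x) ` Q = G z a (b*c) ` D"
          unfolding Q_def \<Phi>_def G_def by (simp add: image_image mult.assoc)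
        have "b * c \<in> \<rat>" using c ab by auto
        then show "Sup ((\<lambda>x. a * fst x + b * snd x) ` P) \<le> Sup ((\<lambda>x. a * fst x + b * snd x) ` Q)"
          unfolding e1 e2 z_def r using supG[OF c ab(1)] by blast
      qed
      have bdz: "bdd_above (z ` K c r)"
        by (rule bounded_imp_bdd_above[OF bounded_linear_image[OF bK blz]])
      have e0: "e > 0" unfolding e_def by (rule ef)
      obtain y where y: "y \<in> K c r" "Sup (z ` K c r) - e < z y"
        using less_cSupD[of "z ` K c r" "Sup (z ` K c r) - e"] Kne e0 by auto
      then obtain x where x: "x \<in> cball 0 1" "r < c * xs x" "y = T x" unfolding K_def by auto
      define pt where "pt = \<Phi> (T x, xs x)"
      have "pt \<in> P" unfolding P_def A_def pt_def using x by auto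
      hence ptc: "pt \<in> closure Q" using PQ by auto
      define \<epsilon> where "\<epsilon> = min (c * xs x - r) (z y - (Sup (z ` K c r) - e))"
      have "\<epsilon> > 0" unfolding \<epsilon>_def using x y by auto
      then obtain qq where qq: "qq \<in> Q" "dist qq pt < \<epsilon>" using ptc unfolding closure_approachable by blast
      then obtain d where d: "d \<in> D" "qq = \<Phi> d" unfolding Q_def by auto
      then obtain x' where x': "x' \<in> cball 0 1" "d = (T x', xs x')" using DA unfolding A_def by auto
      have "dist (fst qq) (fst pt) < \<epsilon>" "dist (snd qq) (snd pt) < \<epsilon>"
        using le_less_trans[OF dist_fst_le qq(2)] le_less_trans[OF dist_snd_le qq(2)] by auto
      hence i1: "\<bar>z (T x') - z (T x)\<bar> < \<epsilon>" and i2: "\<bar>c * xs x' - c * xs x\<bar> < \<epsilon>"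
        unfolding d(2) x'(2) pt_def \<Phi>_def dist_real_def by auto
      have h1: "Sup (z ` K c r) - e < z (T x')" using i1 x y unfolding \<epsilon>_def by auto
      have h2: "r < c * xs x'" using i2 unfolding \<epsilon>_def by auto
      have "T x' \<in> K c r" unfolding K_def using x' h2 by auto
      hence "T x' \<in> Sf c r k" unfolding zf3 slice_def using h1 z_def e_def by auto
      then show ?thesis using d x' h2 by (intro bexI[of _ d]) auto
    qed
    have close: "K c r \<subseteq> closure (fst ` (D \<inter> {p. r < c * snd p}))"
      if c: "c = 1 \<or> c = -1" and r: "r = of_rat q" for c r q
    proof (cases "K c r = {}")
      case True then show ?thesis by simp
    next
      case False
      define E where "E = fst ` (D \<inter> {p. r < c * snd p})"
      have EK: "E \<subseteq> K c r" unfolding E_def K_def using DA unfolding A_def by auto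
      have EM: "\<forall>n. E \<inter> Sf c r n \<noteq> {}"
      proof
        fix n
        obtain p where "p \<in> D" "r < c * snd p" "fst p \<in> Sf c r n" using region[OF c r False] by blast
        then show "E \<inter> Sf c r n \<noteq> {}" unfolding E_def by auto
      qed
      have "convex ((\<lambda>p::'b\<times>real. c * snd p) -` {r<..})"
        by (rule convex_linear_vimage) (auto intro: bounded_linear.linear bounded_linear_const_mult bounded_linear_snd)
      moreover have "{p::'b\<times>real. r < c * snd p} = (\<lambda>p. c * snd p) -` {r<..}" by auto
      ultimately have "convex (D \<inter> {p. r < c * snd p})" using cD convex_Int by auto
      hence cE: "convex E" unfolding E_def by (rule convex_linear_image[OF linear_fst])
      show ?thesis using Sf2[OF EK EM] cE unfolding E_def[symmetric] by (simp add: convex_hull_eq[THEN iffD2])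
    qed
    show "A \<subseteq> closure (convex hull B)" unfolding D_def[symmetric]
    proof
      fix a assume "a \<in> A"
      then obtain x0 where x0: "x0 \<in> cball 0 1" "a = (T x0, xs x0)" unfolding A_def by auto
      show "a \<in> closure D" unfolding closure_approachable
      proof (intro allI impI)
        fix \<epsilon> :: real assume e0: "\<epsilon> > 0"
        define \<delta> where "\<delta> = \<epsilon> / 4"
        have d0: "\<delta> > 0" using e0 \<delta>_def by simp
        define t0 where "t0 = xs x0"
        define y0 where "y0 = T x0"
        obtain r1 where r1: "r1 \<in> \<rat>" "t0 - \<delta> < r1" "r1 < t0"
          using Rats_dense_in_real[of "t0 - \<delta>" t0] d0 by auto
        obtain q1 where q1: "r1 = of_rat q1" using r1(1) Rats_cases by blast
        have "y0 \<in> K 1 r1" unfolding K_def y0_def t0_def by (rule imageI) (use x0 r1 t0_def in auto)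
        hence "y0 \<in> closure (fst ` (D \<inter> {p. r1 < 1 * snd p}))" using close[of 1 r1 q1] q1 by auto
        then obtain p1 where p1: "p1 \<in> D" "r1 < snd p1" "dist (fst p1) y0 < \<delta>"
          using d0 unfolding closure_approachable by force
        obtain r2 where r2: "r2 \<in> \<rat>" "- t0 - \<delta> < r2" "r2 < - t0"
          using Rats_dense_in_real[of "- t0 - \<delta>" "- t0"] d0 by auto
        obtain q2 where q2: "r2 = of_rat q2" using r2(1) Rats_cases by blast
        have "y0 \<in> K (-1) r2" unfolding K_def y0_def t0_def by (rule imageI) (use x0 r2 t0_def in auto)
        hence "y0 \<in> closure (fst ` (D \<inter> {p. r2 < (-1) * snd p}))" using close[of "-1" r2 q2] q2 by auto
        then obtain p2 where p2: "p2 \<in> D" "r2 < - snd p2" "dist (fst p2) y0 < \<delta>"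
          using d0 unfolding closure_approachable by force
        have aeq: "a = (y0, t0)" using x0 y0_def t0_def by simp
        show "\<exists>y\<in>D. dist y a < \<epsilon>"
        proof (cases "snd p1 \<le> t0")
          case True
          have "dist p1 a \<le> dist (fst p1) y0 + dist (snd p1) t0" unfolding aeq by (rule dist_pair_le)
          also have "\<dots> < \<epsilon>" using p1 r1 True \<delta>_def e0 by (auto simp: dist_real_def)
          finally show ?thesis using p1 by blast
        next
          case F1: False
          show ?thesis
          proof (cases "t0 \<le> snd p2")
            case True
            have "dist p2 a \<le> dist (fst p2) y0 + dist (snd p2) t0" unfolding aeq by (rule dist_pair_le)
            also have "\<dots> < \<epsilon>" using p2 r2 True \<delta>_def e0 by (auto simp: dist_real_def)
            finally show ?thesis using p2 by blast
          next
            case F2: False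
            define u where "u = (t0 - snd p2) / (snd p1 - snd p2)"
            have u0: "0 \<le> u" "u \<le> 1" unfolding u_def using F1 F2 by auto
            define pm where "pm = u *\<^sub>R p1 + (1 - u) *\<^sub>R p2"
            have pmD: "pm \<in> D" unfolding pm_def using convexD[OF cD p1(1) p2(1)] u0 by auto
            have "snd pm = u * snd p1 + (1 - u) * snd p2" unfolding pm_def by simp
            also have "\<dots> = snd p2 + u * (snd p1 - snd p2)" by (simp add: algebra_simps)
            also have "u * (snd p1 - snd p2) = t0 - snd p2" unfolding u_def using F1 F2 by simp
            also have "snd p2 + (t0 - snd p2) = t0" by simp
            finally have sp: "snd pm = t0" .
            have "fst pm - y0 = u *\<^sub>R (fst p1 - y0) + (1 - u) *\<^sub>R (fst p2 - y0)"
              unfolding pm_def by (simp add: algebra_simps)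
            hence "norm (fst pm - y0) \<le> u * norm (fst p1 - y0) + (1 - u) * norm (fst p2 - y0)"
              using u0 by (metis (no_types, lifting) abs_of_nonneg diff_ge_0_iff_ge norm_scaleR norm_triangle_ineq)
            also have "\<dots> \<le> u * \<delta> + (1 - u) * \<delta>"
              using p1(3) p2(3) u0 by (intro add_mono mult_left_mono) (auto simp: dist_norm)
            finally have "dist (fst pm) y0 \<le> \<delta>" by (simp add: dist_norm algebra_simps)
            hence "dist pm a \<le> \<delta>" using dist_pair_le[of pm y0 t0] sp aeq by simp
            then show ?thesis using pmD \<delta>_def e0 by (intro bexI[of _ pm]) auto
          qed
        qed
      qed
    qed
  qed
  show ?thesis
    unfolding SCD_operator_def SCD_set_def A_def[symmetric]
  proof (intro conjI exI[of _ S] allI impI)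
    show "bounded_linear (\<lambda>x. (T x, xs x))" by (rule blF)
    show "convex A" by (rule cA)
    show "bounded A" by (rule bA)
    show "is_slice A (S n)" for n by (rule slS)
    show "A \<subseteq> closure (convex hull B)" if "B \<subseteq> A" "\<forall>n. B \<inter> S n \<noteq> {}" for B
      by (rule key[OF that])
  qed
qed

end
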